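(* Let $I\subseteq\mathbb{R}$ be an interval, let $f:I\to\mathbb{R}$ be differentiable on the interior $I^\circ$ of $I$, and let $a,b\in I$ with $a<b$ and $f'\in L^1[a,b]$. Let $s\in(0,1]$, $\alpha\in[0,1]$, $m\in(0,1]$, and assume $b/m\in I^\circ$. If $|f'|$ is $s$-$(\alpha,m)$-convex (in the first sense) on $[a,b]$, then $$\left|\frac{f(a)+f(b)}{2}-\frac{1}{b-a}\int_a^b f(x)\,dx\right|\le \frac{b-a}{2}\left[v_1|f'(a)|+v_2\left|f'\!\left(\frac{b}{m}\right)\right|\right],$$ where $v_1=\dfrac{1+2^{\alpha s}(\alpha s)}{2^{\alpha s}(\alpha s+1)(\alpha s+2)}$ and $v_2=m\left(\frac12-v_1\right)$.
   Context: Let $s\in(0,1]$, $\alpha\in[0,1]$, $m\in(0,1]$. A nonnegative function $g$ is called $s$-$(\alpha,m)$-convex (in the first sense) on $[a,b]$ if for all $x,y\in[a,b]$ (with $y/m$ in the domain of $g$) and all $t\in[0,1]$, $$g(tx+(1-t)y)\le t^{\alpha s}g(x)+m\,(1-t^{\alpha s})\,g\!\left(\frac{y}{m}\right).$$ *)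

theory Defs
  imports "HOL-Analysis.Analysis"
begin

text \<open>Real power t to the e, with the mathematical convention t to the 0 equal to 1 (also at t = 0).\<close>
definition rpow :: "real \<Rightarrow> real \<Rightarrow> real" where
  "rpow t e = (if e = 0 then 1 else t powr e)"

text \<open>g is s-(alpha,m)-convex (first sense) on S, where D is the domain of g
  (the condition is required for those y with y/m in D).\<close>
definition s_alpha_m_convex ::
  "real \<Rightarrow> real \<Rightarrow> real \<Rightarrow> real set \<Rightarrow> real set \<Rightarrow> (real \<Rightarrow> real) \<Rightarrow> bool" where
  "s_alpha_m_convex s \<alpha> m D S g \<longleftrightarrow>
     (\<forall>x\<in>S. 0 \<le> g x) \<and>
     (\<forall>x\<in>S. \<forall>y\<in>S. y / m \<in> D \<longrightarrow> (\<forall>t\<in>{0..1}.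
        g (t * x + (1 - t) * y) \<le> rpow t (\<alpha> * s) * g x + m * (1 - rpow t (\<alpha> * s)) * g (y / m)))"

end

theory Submission imports Defs begin

lemma phi_deriv:
  fixes L p u v t :: real
  assumes "0 < L" "0 \<le> p" "0 < t"
  shows "((\<lambda>t. u * (L*(t^2/2 - t/2)) + v * (L*(t powr (p+2)/(p+2) - t powr (p+1)/(2*(p+1)))))
     has_real_derivative (-L) * ((1/2 - t) * (u + t powr p * v))) (at t)"
proof -
  have d2: "((\<lambda>t. t powr (p+2)) has_real_derivative (p+2) * (t * t powr p)) (at t)"
    using has_real_derivative_powr[of t "p+2"] assms by (simp add: powr_add add.commute)
  have d1: "((\<lambda>t. t powr (p+1)) has_real_derivative (p+1) * (t powr p)) (at t)"
    using has_real_derivative_powr[of t "p+1"] assms by simp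
  have d0: "((\<lambda>t. t^2/2 - t/2) has_real_derivative (t - 1/2)) (at t)"
    by (auto intro!: derivative_eq_intros)
  have "((\<lambda>t. u * (L*(t^2/2 - t/2)) + v * (L*(t powr (p+2)/(p+2) - t powr (p+1)/(2*(p+1)))))
     has_real_derivative u * (L*(t - 1/2)) + v * (L*((p+2) * (t * t powr p)/(p+2) - (p+1) * (t powr p)/(2*(p+1))))) (at t)"
    by (intro DERIV_add DERIV_cmult DERIV_diff DERIV_cdivide d0 d1 d2)
  moreover have "u * (L*(t - 1/2)) + v * (L*((p+2) * (t * t powr p)/(p+2) - (p+1) * (t powr p)/(2*(p+1))))
     = (-L) * ((1/2 - t) * (u + t powr p * v))"
  proof -
    have q1: "(p+2) * (t * t powr p)/(p+2) = t * t powr p" using assms by simp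
    have q2: "(p+1) * (t powr p)/(2*(p+1)) = t powr p / 2" using assms by (simp add: field_simps)
    show ?thesis unfolding q1 q2 by (simp add: algebra_simps)
  qed
  ultimately show ?thesis by simp
qed

lemma bound_integral:
  fixes a b p A B m :: real
  assumes ab: "a < b" and p: "0 \<le> p"
  shows "((\<lambda>x. \<bar>x - (a+b)/2\<bar> * (rpow ((b-x)/(b-a)) p * A + m*(1 - rpow ((b-x)/(b-a)) p)*B))
     has_integral ((b-a)^2/2 * ((1 + 2 powr p * p) / (2 powr p * (p+1) * (p+2)) * A
        + m*(1/2 - (1 + 2 powr p * p) / (2 powr p * (p+1) * (p+2)))*B))) {a..b}"
proof -
  define L where "L = b - a"
  have L: "L > 0" using ab L_def by simp
  define c where "c = (a+b)/2"
  have ac: "a \<le> c" "c \<le> b" using ab c_def by auto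
  define u where "u = m*B"
  define v where "v = A - m*B"
  define \<phi> where "\<phi> = (\<lambda>t::real. u * (L*(t^2/2 - t/2)) + v * (L*(t powr (p+2)/(p+2) - t powr (p+1)/(2*(p+1)))))"
  define H where "H = (\<lambda>x. \<phi> ((b-x)/L))"
  have Hd: "(H has_real_derivative (1/2 - (b-x)/L) * (u + ((b-x)/L) powr p * v)) (at x)"
    if "0 < (b-x)/L" for x
  proof -
    have dT: "((\<lambda>x. (b-x)/L) has_real_derivative (-1/L)) (at x)"
      using L by (auto intro!: derivative_eq_intros)
    have "(H has_real_derivative (- L * ((1/2 - (b-x)/L) * (u + ((b-x)/L) powr p * v))) * (-1/L)) (at x)"
      unfolding H_def \<phi>_def
      by (rule DERIV_chain2[OF phi_deriv[OF L p that] dT])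
    then show ?thesis using L by simp
  qed
  have Hc: "continuous_on {a..b} H"
    unfolding H_def \<phi>_def using L p
    by (intro continuous_intros continuous_on_powr') (auto simp: L_def)
  have g1: "((\<lambda>x. \<bar>x - (a+b)/2\<bar> * (rpow ((b-x)/(b-a)) p * A + m*(1 - rpow ((b-x)/(b-a)) p)*B))
      has_integral (L * H b - L * H c)) {c..b}"
  proof (rule fundamental_theorem_of_calculus_interior[OF ac(2)])
    show "continuous_on {c..b} (\<lambda>x. L * H x)"
      using Hc ac by (intro continuous_intros) (auto elim: continuous_on_subset)
  next
    fix x assume x: "x \<in> {c<..<b}"
    have T: "0 < (b-x)/L" using x L by auto
    have "((\<lambda>x. L * H x) has_real_derivative L * ((1/2 - (b-x)/L) * (u + ((b-x)/L) powr p * v))) (at x)"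
      using Hd[OF T] by (intro DERIV_cmult)
    moreover have "L * ((1/2 - (b-x)/L) * (u + ((b-x)/L) powr p * v))
       = \<bar>x - (a+b)/2\<bar> * (rpow ((b-x)/(b-a)) p * A + m*(1 - rpow ((b-x)/(b-a)) p)*B)"
    proof -
      have e1: "\<bar>x - (a+b)/2\<bar> = L * (1/2 - (b-x)/L)" using x L c_def L_def by (auto simp: field_simps)
      have e2: "rpow ((b-x)/(b-a)) p = ((b-x)/L) powr p" using T L by (auto simp: rpow_def L_def)
      show ?thesis unfolding e1 e2 u_def v_def by (simp add: algebra_simps)
    qed
    ultimately show "((\<lambda>x. L * H x) has_vector_derivative
       \<bar>x - (a+b)/2\<bar> * (rpow ((b-x)/(b-a)) p * A + m*(1 - rpow ((b-x)/(b-a)) p)*B)) (at x)"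
      by (simp add: has_real_derivative_iff_has_vector_derivative)
  qed
  have g2: "((\<lambda>x. \<bar>x - (a+b)/2\<bar> * (rpow ((b-x)/(b-a)) p * A + m*(1 - rpow ((b-x)/(b-a)) p)*B))
      has_integral (- L * H c - (- L * H a))) {a..c}"
  proof (rule fundamental_theorem_of_calculus_interior[OF ac(1)])
    show "continuous_on {a..c} (\<lambda>x. - L * H x)"
      using Hc ac by (intro continuous_intros) (auto elim: continuous_on_subset)
  next
    fix x assume x: "x \<in> {a<..<c}"
    have T: "0 < (b-x)/L" using x L c_def by auto
    have "((\<lambda>x. - L * H x) has_real_derivative - L * ((1/2 - (b-x)/L) * (u + ((b-x)/L) powr p * v))) (at x)"
      using Hd[OF T] by (intro DERIV_cmult)
    moreover have "- L * ((1/2 - (b-x)/L) * (u + ((b-x)/L) powr p * v))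
       = \<bar>x - (a+b)/2\<bar> * (rpow ((b-x)/(b-a)) p * A + m*(1 - rpow ((b-x)/(b-a)) p)*B)"
    proof -
      have e1: "\<bar>x - (a+b)/2\<bar> = - L * (1/2 - (b-x)/L)" using x L c_def L_def by (auto simp: field_simps)
      have e2: "rpow ((b-x)/(b-a)) p = ((b-x)/L) powr p" using T L by (auto simp: rpow_def L_def)
      show ?thesis unfolding e1 e2 u_def v_def by (simp add: algebra_simps)
    qed
    ultimately show "((\<lambda>x. - L * H x) has_vector_derivative
       \<bar>x - (a+b)/2\<bar> * (rpow ((b-x)/(b-a)) p * A + m*(1 - rpow ((b-x)/(b-a)) p)*B)) (at x)"
      by (simp add: has_real_derivative_iff_has_vector_derivative)
  qed
  have tot: "((\<lambda>x. \<bar>x - (a+b)/2\<bar> * (rpow ((b-x)/(b-a)) p * A + m*(1 - rpow ((b-x)/(b-a)) p)*B))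
      has_integral (- L * H c - (- L * H a) + (L * H b - L * H c))) {a..b}"
    by (rule has_integral_combine[OF ac g2 g1])
  have Hb: "H b = 0" unfolding H_def \<phi>_def using p by simp
  have Ha: "H a = v * (L*(1/(p+2) - 1/(2*(p+1))))" unfolding H_def \<phi>_def using L by (simp add: L_def)
  define W where "W = 2 powr p"
  have W: "W > 0" unfolding W_def by simp
  have h1: "(1/2::real) powr (p+1) = 1/(2*W)"
    unfolding W_def by (simp add: powr_add powr_divide)
  have h2: "(1/2::real) powr (p+2) = 1/(4*W)"
    unfolding W_def by (simp add: powr_add powr_divide)
  have Hc': "H c = u * (L*(-1/8)) + v * (L*(1/(4*W)/(p+2) - 1/(2*W)/(2*(p+1))))"
  proof -
    have hc: "(b - c)/L = 1/2" using c_def L_def L by (simp add: field_simps)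
    have "H c = \<phi> (1/2)" unfolding H_def hc ..
    also have "\<dots> = u * (L*(-1/8)) + v * (L*(1/(4*W)/(p+2) - 1/(2*W)/(2*(p+1))))"
      unfolding \<phi>_def h1 h2 by (simp add: power2_eq_square)
    finally show ?thesis .
  qed
  have "- L * H c - (- L * H a) + (L * H b - L * H c)
     = (b-a)^2/2 * ((1 + W * p) / (W * (p+1) * (p+2)) * A + m*(1/2 - (1 + W * p) / (W * (p+1) * (p+2)))*B)"
  proof -
    have n1: "p + 1 \<noteq> 0" "p + 2 \<noteq> 0" "W \<noteq> 0" "2*(p+1) \<noteq> 0" "4*p+8 \<noteq> 0" "2*p+2 \<noteq> 0" "2*p+4 \<noteq> 0" using W p by auto
    show ?thesis unfolding Hb Ha Hc' u_def v_def L_def[symmetric]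
      apply (simp add: divide_simps n1 power2_eq_square)
      by algebra
  qed
  then show ?thesis using tot unfolding W_def by (metis (no_types, lifting))
qed

theorem theorem1:
  fixes I :: "real set" and f f' :: "real \<Rightarrow> real" and a b s \<alpha> m :: real
  assumes "is_interval I"
    and "\<forall>x\<in>interior I. (f has_real_derivative f' x) (at x)"
    and "a \<in> interior I" and "b \<in> interior I" and "a < b"
    and "set_integrable lborel {a..b} f'"
    and "0 < s" and "s \<le> 1" and "0 \<le> \<alpha>" and "\<alpha> \<le> 1" and "0 < m" and "m \<le> 1"
    and "b / m \<in> interior I"
    and "s_alpha_m_convex s \<alpha> m (interior I) {a..b} (\<lambda>x. \<bar>f' x\<bar>)"
  shows "\<bar>(f a + f b) / 2 - integral {a..b} f / (b - a)\<bar>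
         \<le> (b - a) / 2 *
           ((1 + 2 powr (\<alpha> * s) * (\<alpha> * s)) / (2 powr (\<alpha> * s) * (\<alpha> * s + 1) * (\<alpha> * s + 2)) * \<bar>f' a\<bar>
            + m * (1 / 2 - (1 + 2 powr (\<alpha> * s) * (\<alpha> * s)) / (2 powr (\<alpha> * s) * (\<alpha> * s + 1) * (\<alpha> * s + 2)))
              * \<bar>f' (b / m)\<bar>)"
proof -
  define p where "p = \<alpha> * s"
  have p: "0 \<le> p" using assms(7,9) p_def by simp
  define V where "V = (1 + 2 powr p * p) / (2 powr p * (p+1) * (p+2))"
  define c where "c = (a+b)/2"
  have ab: "a < b" using assms(5) by simp
  have sub: "{a..b} \<subseteq> interior I"
  proof -
    have "is_interval (interior I)" using assms(1) by (simp add: is_interval_convex_1)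
    then have "\<forall>a\<in>interior I. \<forall>b\<in>interior I. \<forall>x. a \<le> x \<and> x \<le> b \<longrightarrow> x \<in> interior I"
      by (simp only: is_interval_1)
    then show ?thesis using assms(3,4) by (meson atLeastAtMost_iff subsetI)
  qed
  have der: "(f has_real_derivative f' x) (at x)" if "x \<in> {a..b}" for x
    using assms(2) sub that by blast
  have fc: "continuous_on {a..b} f"
    by (intro continuous_at_imp_continuous_on ballI) (rule DERIV_isCont[OF der])
  define F where "F = (\<lambda>x. (x - c) * f x - integral {a..x} f)"
  have Fd: "(F has_vector_derivative (x - c) * f' x) (at x within {a..b})" if x: "x \<in> {a..b}" for x
  proof -
    have d1: "((\<lambda>x. (x-c) * f x) has_real_derivative (1 * f x + (x - c) * f' x)) (at x within {a..b})"
    proof -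
      have "((\<lambda>x. x - c) has_real_derivative 1 - 0) (at x within {a..b})"
        by (intro DERIV_diff DERIV_ident DERIV_const)
      from DERIV_mult[OF this has_field_derivative_at_within[OF der[OF x]]] show ?thesis by (simp add: mult.commute)
    qed
    have d2: "((\<lambda>u. integral {a..u} f) has_real_derivative f x) (at x within {a..b})"
      using integral_has_vector_derivative[OF fc x] by (simp add: has_real_derivative_iff_has_vector_derivative)
    have "(F has_real_derivative (1 * f x + (x - c) * f' x) - f x) (at x within {a..b})"
      unfolding F_def by (rule DERIV_diff[OF d1 d2])
    then show ?thesis by (simp add: has_real_derivative_iff_has_vector_derivative)
  qed
  have I1: "((\<lambda>x. (x - c) * f' x) has_integral (F b - F a)) {a..b}"
    using fundamental_theorem_of_calculus[OF less_imp_le[OF ab] Fd] by simp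
  have FbFa: "F b - F a = (b - a) * ((f a + f b) / 2 - integral {a..b} f / (b - a))"
    unfolding F_def c_def using ab by (simp add: field_simps)
  define A where "A = \<bar>f' a\<bar>"
  define B where "B = \<bar>f' (b/m)\<bar>"
  define g where "g = (\<lambda>x. \<bar>x - (a+b)/2\<bar> * (rpow ((b-x)/(b-a)) p * A + m*(1 - rpow ((b-x)/(b-a)) p)*B))"
  have I2: "(g has_integral ((b-a)^2/2 * (V * A + m*(1/2 - V)*B))) {a..b}"
    unfolding g_def V_def by (rule bound_integral[OF ab p])
  have le: "norm ((x - c) * f' x) \<le> g x" if x: "x \<in> {a..b}" for x
  proof -
    define t where "t = (b-x)/(b-a)"
    have t: "t \<in> {0..1}" using x ab by (auto simp: t_def field_simps)
    have tx1: "t * (b - a) = b - x" using ab by (simp add: t_def)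
    have tx: "t * a + (1 - t) * b = x"
    proof -
      have "t * a + (1 - t) * b = b - t * (b - a)" by (simp add: algebra_simps)
      then show ?thesis using tx1 by simp
    qed
    have "\<bar>f' (t * a + (1 - t) * b)\<bar> \<le> rpow t (\<alpha> * s) * \<bar>f' a\<bar> + m * (1 - rpow t (\<alpha> * s)) * \<bar>f' (b / m)\<bar>"
    proof -
      have "\<forall>x\<in>{a..b}. \<forall>y\<in>{a..b}. y / m \<in> interior I \<longrightarrow> (\<forall>t\<in>{0..1}.
        \<bar>f' (t * x + (1 - t) * y)\<bar> \<le> rpow t (\<alpha> * s) * \<bar>f' x\<bar> + m * (1 - rpow t (\<alpha> * s)) * \<bar>f' (y / m)\<bar>)"
        using assms(14) unfolding s_alpha_m_convex_def by blast
      moreover have "a \<in> {a..b}" "b \<in> {a..b}" using ab by auto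
      ultimately show ?thesis using assms(13) t by blast
    qed
    then have "\<bar>f' x\<bar> \<le> rpow t p * A + m * (1 - rpow t p) * B"
      unfolding tx A_def B_def p_def .
    then show ?thesis unfolding g_def t_def[symmetric] c_def real_norm_def abs_mult
      by (rule mult_left_mono) simp
  qed
  have "norm (integral {a..b} (\<lambda>x. (x - c) * f' x)) \<le> integral {a..b} g"
    using I1 I2 le by (intro integral_norm_bound_integral) auto
  then have "\<bar>F b - F a\<bar> \<le> (b-a)^2/2 * (V * A + m*(1/2 - V)*B)"
    using I1 I2 by (simp add: integral_unique)
  then have "(b - a) * \<bar>(f a + f b) / 2 - integral {a..b} f / (b - a)\<bar> \<le> (b - a) * ((b-a)/2 * (V * A + m*(1/2 - V)*B))"
    unfolding FbFa using ab by (simp add: abs_mult power2_eq_square)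
  then have "\<bar>(f a + f b) / 2 - integral {a..b} f / (b - a)\<bar> \<le> (b-a)/2 * (V * A + m*(1/2 - V)*B)"
    using ab by simp
  then show ?thesis unfolding V_def A_def B_def p_def .
qed
end
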